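(* Suppose there exists a (possibly randomized) one-way communication protocol in which each message has at most $c$ bits and which solves $\mathrm{OvME}_{n,k,t}$ with probability at least $\frac12+\varepsilon$ for some $\varepsilon>0$. Then there exists a deterministic one-way protocol for $\mathrm{HLP}_{n,t}$ in which Alice sends at most $c$ bits and Bob answers correctly with probability at least $\frac12+\varepsilon/k$.
   Context: One-vs-Many-Expanders $\mathrm{OvME}_{n,k,t}$: $n$ vertices $V$, a uniformly random labeling $\Sigma$ partitioning $V$ into $t$ equal-size classes $\Sigma_1,\dots,\Sigma_t$, unknown to the players ($4t$ divides $n$). Players $P_1,\dots,P_k$; $P_i$ receives a matching $M_i$ of size $n/4$. With probability $1/2$ each: Yes-case, each $M_i$ independently uniform over all matchings of size $n/4$ on $V$; No-case, each $M_i$ independently uniform over matchings of size $n/4$ with exactly $n/(4t)$ edges inside each class $\Sigma_j$. Player $P_1$ sends a message to $P_2$, $P_2$ (knowing $M_2$ and the received message) to $P_3$, and so on; $P_k$ outputs Yes or No. Hidden Labeling Problem $\mathrm{HLP}_{n,t}$: Alice gets a uniformly random labeling $\Sigma$ of $V$ into $t$ equal-size classes, Bob gets a matching $M$ of size $n/4$; with probability $1/2$ each, Yes-case: $M$ uniform over all matchings of size $n/4$ on $V$; No-case: $M$ uniform over matchings of size $n/4$ with exactly $n/(4t)$ edges inside each class. Alice sends one message to Bob, who outputs Yes or No. Success probability is over the input distribution and protocol randomness. *)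

theory Defs
  imports "HOL-Probability.Probability"
begin

definition edges :: "nat \<Rightarrow> nat set set" where
  "edges n = {e. \<exists>u v. u < n \<and> v < n \<and> u \<noteq> v \<and> e = {u, v}}"

definition matchings :: "nat \<Rightarrow> nat \<Rightarrow> nat set set set" where
  "matchings n s = {M. M \<subseteq> edges n \<and> (\<forall>e\<in>M. \<forall>e'\<in>M. e \<noteq> e' \<longrightarrow> e \<inter> e' = {}) \<and> card M = s}"

definition labelings :: "nat \<Rightarrow> nat \<Rightarrow> (nat \<Rightarrow> nat) set" where
  "labelings n t = {\<sigma>. (\<forall>v. n \<le> v \<longrightarrow> \<sigma> v = 0) \<and> (\<forall>v<n. \<sigma> v < t) \<and>
                        (\<forall>j<t. card {v\<in>{0..<n}. \<sigma> v = j} = n div t)}"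

definition no_matchings :: "nat \<Rightarrow> nat \<Rightarrow> (nat \<Rightarrow> nat) \<Rightarrow> nat set set set" where
  "no_matchings n t \<sigma> = {M \<in> matchings n (n div 4).
      \<forall>j<t. card {e\<in>M. \<forall>v\<in>e. \<sigma> v = j} = n div (4 * t)}"

definition matching_dist :: "nat \<Rightarrow> nat \<Rightarrow> (nat \<Rightarrow> nat) \<Rightarrow> bool \<Rightarrow> nat set set pmf" where
  "matching_dist n t \<sigma> yes =
     (if yes then pmf_of_set (matchings n (n div 4)) else pmf_of_set (no_matchings n t \<sigma>))"

text \<open>Randomized one-way protocol for OvME (public randomness r drawn from R):
  player i (1 \<le> i < k) sends send i r m M_i, where m is the message received (empty for P_1);
  player k outputs out r m M_k (True = Yes).\<close>

fun ovme_msg :: "(nat \<Rightarrow> 'r \<Rightarrow> bool list \<Rightarrow> nat set set \<Rightarrow> bool list) \<Rightarrow> 'r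
                 \<Rightarrow> (nat \<Rightarrow> nat set set) \<Rightarrow> nat \<Rightarrow> bool list" where
  "ovme_msg send r Ms 0 = []"
| "ovme_msg send r Ms (Suc i) = send (Suc i) r (ovme_msg send r Ms i) (Ms (Suc i))"

definition ovme_success_prob ::
  "nat \<Rightarrow> nat \<Rightarrow> nat \<Rightarrow> 'r pmf \<Rightarrow> (nat \<Rightarrow> 'r \<Rightarrow> bool list \<Rightarrow> nat set set \<Rightarrow> bool list)
   \<Rightarrow> ('r \<Rightarrow> bool list \<Rightarrow> nat set set \<Rightarrow> bool) \<Rightarrow> real" where
  "ovme_success_prob n k t R send out =
     measure_pmf.prob
       (do { yes \<leftarrow> bernoulli_pmf (1/2);
             \<sigma> \<leftarrow> pmf_of_set (labelings n t);
             Ms \<leftarrow> Pi_pmf {1..k} {} (\<lambda>i. matching_dist n t \<sigma> yes);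
             r \<leftarrow> R;
             return_pmf (out r (ovme_msg send r Ms (k - 1)) (Ms k) = yes) })
       {True}"

definition hlp_success_prob ::
  "nat \<Rightarrow> nat \<Rightarrow> ((nat \<Rightarrow> nat) \<Rightarrow> bool list) \<Rightarrow> (bool list \<Rightarrow> nat set set \<Rightarrow> bool) \<Rightarrow> real" where
  "hlp_success_prob n t alice bob =
     measure_pmf.prob
       (do { yes \<leftarrow> bernoulli_pmf (1/2);
             \<sigma> \<leftarrow> pmf_of_set (labelings n t);
             M \<leftarrow> matching_dist n t \<sigma> yes;
             return_pmf (bob (alice \<sigma>) M = yes) })
       {True}"

end

theory Submission imports Defs begin

lemma pmf_integrable_bound:
  fixes f :: "'a \<Rightarrow> real"
  assumes "\<And>x. \<bar>f x\<bar> \<le> B"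
  shows "integrable (measure_pmf p) f"
  using assms by (intro measure_pmf.integrable_const_bound[where B=B]) auto

lemma pmf_integral_abs_bound:
  fixes f :: "'a \<Rightarrow> real"
  assumes "\<And>x. \<bar>f x\<bar> \<le> B"
  shows "\<bar>measure_pmf.expectation p f\<bar> \<le> B"
proof -
  have "\<bar>measure_pmf.expectation p f\<bar> \<le> measure_pmf.expectation p (\<lambda>x. \<bar>f x\<bar>)"
    using integral_abs_bound by blast
  also have "\<dots> \<le> measure_pmf.expectation p (\<lambda>x. B)"
    using assms by (intro integral_mono pmf_integrable_bound[where B=B])
      (auto intro: order_trans[OF abs_ge_zero])
  finally show ?thesis by simp
qed

lemma pmf_exists_ge:
  fixes f :: "'a \<Rightarrow> real"
  assumes B: "\<And>x. \<bar>f x\<bar> \<le> B" and a: "a \<le> measure_pmf.expectation p f"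
  shows "\<exists>x\<in>set_pmf p. a \<le> f x"
proof (rule ccontr)
  assume "\<not> ?thesis"
  hence lt: "\<forall>x\<in>set_pmf p. f x < a" by auto
  have "measure_pmf.expectation p f < measure_pmf.expectation p (\<lambda>_. a)"
    by (rule measure_pmf.integral_less_AE_space)
       (use B lt in \<open>auto intro!: pmf_integrable_bound[where B=B] simp: AE_measure_pmf_iff\<close>)
  with a show False by simp
qed

lemma pmf_bind_not:
  "pmf (bind_pmf p (\<lambda>x. return_pmf (\<not> f x))) True = 1 - pmf (bind_pmf p (\<lambda>x. return_pmf (f x))) True"
proof -
  have "bind_pmf p (\<lambda>x. return_pmf (\<not> f x)) = map_pmf Not (bind_pmf p (\<lambda>x. return_pmf (f x)))"
    by (simp add: map_bind_pmf)
  moreover have "pmf (map_pmf Not q) True = pmf q False" for q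
    using pmf_map_inj'[of Not q False] by (simp add: inj_def)
  ultimately show ?thesis by (simp add: pmf_False_conv_True)
qed

definition mrg :: "nat \<Rightarrow> (nat \<Rightarrow> 'a) \<Rightarrow> (nat \<Rightarrow> 'a) \<Rightarrow> nat \<Rightarrow> 'a" where
  "mrg j f g = (\<lambda>y. if y \<in> {1..j} then f y else g y)"

lemma Pi_split:
  assumes "j < k"
  shows "Pi_pmf {1..k} dflt p = do {f \<leftarrow> Pi_pmf {1..j} dflt p; x \<leftarrow> p (Suc j);
     g \<leftarrow> Pi_pmf {Suc (Suc j)..k} dflt p; return_pmf ((mrg j f g)(Suc j := x))}"
proof -
  have e: "{1..k} = insert (Suc j) ({1..j} \<union> {Suc (Suc j)..k})" using assms by auto
  have "Pi_pmf {1..k} dflt p = do {x \<leftarrow> p (Suc j); f \<leftarrow> Pi_pmf {1..j} dflt p;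
     g \<leftarrow> Pi_pmf {Suc (Suc j)..k} dflt p; return_pmf ((mrg j f g)(Suc j := x))}"
    unfolding e
    by (subst Pi_pmf_insert', simp, simp, subst Pi_pmf_union)
       (auto simp: pair_pmf_def map_pmf_def bind_assoc_pmf bind_return_pmf mrg_def)
  also have "\<dots> = do {f \<leftarrow> Pi_pmf {1..j} dflt p; x \<leftarrow> p (Suc j);
     g \<leftarrow> Pi_pmf {Suc (Suc j)..k} dflt p; return_pmf ((mrg j f g)(Suc j := x))}"
    by (rule bind_commute_pmf)
  finally show ?thesis .
qed

fun msg_from :: "(nat \<Rightarrow> 'r \<Rightarrow> bool list \<Rightarrow> nat set set \<Rightarrow> bool list) \<Rightarrow> 'r
   \<Rightarrow> (nat \<Rightarrow> nat set set) \<Rightarrow> nat \<Rightarrow> bool list \<Rightarrow> nat \<Rightarrow> bool list" where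
  "msg_from send r Ms j m 0 = m"
| "msg_from send r Ms j m (Suc d) = send (Suc (j + d)) r (msg_from send r Ms j m d) (Ms (Suc (j + d)))"

lemma ovme_msg_from: "ovme_msg send r Ms (j + d) = msg_from send r Ms j (ovme_msg send r Ms j) d"
  by (induction d) auto

lemma ovme_msg_cong: "(\<And>i. 1 \<le> i \<Longrightarrow> i \<le> j \<Longrightarrow> Ms i = Ms' i) \<Longrightarrow> ovme_msg send r Ms j = ovme_msg send r Ms' j"
  by (induction j) auto

lemma msg_from_cong: "(\<And>i. j < i \<Longrightarrow> i \<le> j + d \<Longrightarrow> Ms i = Ms' i) \<Longrightarrow>
   msg_from send r Ms j m d = msg_from send r Ms' j m d"
  by (induction d) auto

lemma ovme_msg_len: "(\<And>i r m M. length (send i r m M) \<le> c) \<Longrightarrow> length (ovme_msg send r Ms j) \<le> c"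
  by (cases j) auto

lemma pmf_map_Not: "pmf (map_pmf Not q) True = 1 - pmf q True"
  using pmf_map_inj'[of Not q False] by (simp add: inj_def pmf_False_conv_True)

lemma pmf_abs_le1: "\<bar>pmf p x\<bar> \<le> 1"
  using pmf_le_1[of p x] pmf_nonneg[of p x] by linarith

theorem lemma5p4:
  fixes n k t c :: nat and \<epsilon> :: real
    and R :: "'r pmf"
    and send :: "nat \<Rightarrow> 'r \<Rightarrow> bool list \<Rightarrow> nat set set \<Rightarrow> bool list"
    and out :: "'r \<Rightarrow> bool list \<Rightarrow> nat set set \<Rightarrow> bool"
  assumes "0 < t" and "(4 * t) dvd n" and "1 \<le> k"
    and "0 < \<epsilon>"
    and "\<And>i r m M. length (send i r m M) \<le> c"
    and "ovme_success_prob n k t R send out \<ge> 1/2 + \<epsilon>"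
  shows "\<exists>alice bob. (\<forall>\<sigma>. length (alice \<sigma>) \<le> c) \<and>
           hlp_success_prob n t alice bob \<ge> 1/2 + \<epsilon> / k"
proof -
  define L where "L = pmf_of_set (labelings n t)"
  define Y where "Y = pmf_of_set (matchings n (n div 4))"
  define N where "N = (\<lambda>\<sigma>. pmf_of_set (no_matchings n t \<sigma>))"
  define Out where "Out = (\<lambda>r Ms. out r (ovme_msg send r Ms (k - 1)) (Ms k))"
  define Q where "Q = (\<lambda>j'. do {\<sigma> \<leftarrow> L; Ms \<leftarrow> Pi_pmf {1..k} {} (\<lambda>i. if i \<le> j' then N \<sigma> else Y);
                      r \<leftarrow> R; return_pmf (Out r Ms)})"
  define F where "F = (\<lambda>j'. pmf (Q j') True)"
  have md: "matching_dist n t \<sigma> yes = (if yes then Y else N \<sigma>)" for \<sigma> yes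
    by (simp add: matching_dist_def Y_def N_def)
  define P where "P = (\<lambda>yes. do {\<sigma> \<leftarrow> L; Ms \<leftarrow> Pi_pmf {1..k} {} (\<lambda>i. matching_dist n t \<sigma> yes);
                      r \<leftarrow> R; return_pmf (Out r Ms = yes)})"
  have succ: "ovme_success_prob n k t R send out = 1/2 * F 0 + 1/2 * (1 - F k)"
  proof -
    have Pi0: "Pi_pmf {1..k} {} (\<lambda>i. matching_dist n t \<sigma> True) = Pi_pmf {1..k} {} (\<lambda>i. if i \<le> 0 then N \<sigma> else Y)" for \<sigma>
      by (intro Pi_pmf_cong) (auto simp: md)
    have Pik: "Pi_pmf {1..k} {} (\<lambda>i. matching_dist n t \<sigma> False) = Pi_pmf {1..k} {} (\<lambda>i. if i \<le> k then N \<sigma> else Y)" for \<sigma>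
      by (intro Pi_pmf_cong) (auto simp: md)
    have PT: "P True = Q 0" unfolding P_def Q_def Pi0 by simp
    have PF: "P False = map_pmf Not (Q k)" unfolding P_def Q_def Pik by (simp add: map_bind_pmf)
    have "ovme_success_prob n k t R send out = (\<integral>yes. pmf (P yes) True \<partial>bernoulli_pmf (1/2))"
      unfolding ovme_success_prob_def measure_pmf_single L_def Out_def P_def by (rule pmf_bind)
    also have "\<dots> = 1/2 * pmf (P True) True + 1/2 * pmf (P False) True" by simp
    finally show ?thesis unfolding PT PF pmf_map_Not F_def .
  qed
  have B: "F 0 - F k \<ge> 2 * \<epsilon>" using succ assms(6) by (simp add: field_simps)
  have "\<exists>j<k. F j - F (Suc j) \<ge> 2 * \<epsilon> / real k"
  proof (rule ccontr)
    assume "\<not> ?thesis"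
    then have lt: "\<forall>j<k. F j - F (Suc j) < 2 * \<epsilon> / real k" by auto
    have "F 0 - F k = (\<Sum>j<k. F j - F (Suc j))" by (rule sum_lessThan_telescope'[symmetric])
    also have "\<dots> < (\<Sum>j<k. 2 * \<epsilon> / real k)"
      by (rule sum_strict_mono) (use lt assms(3) in \<open>auto simp: lessThan_empty_iff\<close>)
    also have "\<dots> = 2 * \<epsilon>" using assms(3) by simp
    finally show False using B by simp
  qed
  then obtain j where j: "j < k" "F j - F (Suc j) \<ge> 2 * \<epsilon> / real k" by blast
  define alice0 where "alice0 = (\<lambda>r f. ovme_msg send r f j)"
  define bob0 where "bob0 = (\<lambda>r g m x. out r (msg_from send r (g(Suc j := x)) j m (k - 1 - j)) ((g(Suc j := x)) k))"
  have OutEq: "Out r ((mrg j f g)(Suc j := x)) = bob0 r g (alice0 r f) x" for r f g x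
  proof -
    let ?M = "(mrg j f g)(Suc j := x)"
    have "ovme_msg send r ?M (k - 1) = msg_from send r ?M j (ovme_msg send r ?M j) (k - 1 - j)"
      using ovme_msg_from[of send r ?M j "k - 1 - j"] j(1) by simp
    also have "ovme_msg send r ?M j = ovme_msg send r f j"
      by (rule ovme_msg_cong) (auto simp: mrg_def)
    also have "msg_from send r ?M j (ovme_msg send r f j) (k - 1 - j)
             = msg_from send r (g(Suc j := x)) j (ovme_msg send r f j) (k - 1 - j)"
      by (rule msg_from_cong) (auto simp: mrg_def)
    finally have e: "ovme_msg send r ?M (k - 1) = msg_from send r (g(Suc j := x)) j (ovme_msg send r f j) (k - 1 - j)" .
    have kv: "?M k = (g(Suc j := x)) k" using j(1) by (simp add: mrg_def)
    show ?thesis unfolding Out_def bob0_def alice0_def by (simp only: e kv)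
  qed
  define W where "W = Pi_pmf {Suc (Suc j)..k} {} (\<lambda>_. Y)"
  define PN where "PN = (\<lambda>\<sigma>. Pi_pmf {1..j} {} (\<lambda>_. N \<sigma>))"
  define G where "G = (\<lambda>D. do {\<sigma> \<leftarrow> L; f \<leftarrow> PN \<sigma>; x \<leftarrow> D \<sigma>; g \<leftarrow> W; r \<leftarrow> R;
                       return_pmf (bob0 r g (alice0 r f) x)})"
  have QG: "Q j' = G (\<lambda>\<sigma>. if Suc j \<le> j' then N \<sigma> else Y)" if "j' = j \<or> j' = Suc j" for j'
  proof -
    have P1: "Pi_pmf {1..j} {} (\<lambda>i. if i \<le> j' then N \<sigma> else Y) = PN \<sigma>" for \<sigma>
      unfolding PN_def using that by (intro Pi_pmf_cong) auto
    have P2: "Pi_pmf {Suc (Suc j)..k} {} (\<lambda>i. if i \<le> j' then N \<sigma> else Y) = W" for \<sigma>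
      unfolding W_def using that by (intro Pi_pmf_cong) auto
    show ?thesis
      unfolding Q_def G_def
      by (simp only: Pi_split[OF j(1)] P1 P2 bind_assoc_pmf bind_return_pmf OutEq)
  qed
  have QjG: "Q j = G (\<lambda>_. Y)" using QG[of j] by simp
  have QsG: "Q (Suc j) = G N" using QG[of "Suc j"] by simp
  define K where "K = (\<lambda>r g D. do {\<sigma> \<leftarrow> L; f \<leftarrow> PN \<sigma>; x \<leftarrow> D \<sigma>;
                       return_pmf (bob0 r g (alice0 r f) x)})"
  have Greord: "G D = do {r \<leftarrow> R; g \<leftarrow> W; K r g D}" for D
    unfolding G_def K_def
    by (simp only: bind_commute_pmf[where B=W], simp only: bind_commute_pmf[where B=R])
  have FK: "pmf (G D) True = (\<integral>r. (\<integral>g. pmf (K r g D) True \<partial>W) \<partial>R)" for D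
    unfolding Greord by (simp add: pmf_bind)
  define \<Delta> where "\<Delta> = (\<lambda>r g. pmf (K r g (\<lambda>_. Y)) True - pmf (K r g N) True)"
  have \<Delta>b: "\<bar>\<Delta> r g\<bar> \<le> 1" for r g
    unfolding \<Delta>_def using pmf_le_1[of "K r g (\<lambda>_. Y)" True] pmf_nonneg[of "K r g (\<lambda>_. Y)" True]
      pmf_le_1[of "K r g N" True] pmf_nonneg[of "K r g N" True] by linarith
  have intK: "integrable (measure_pmf W) (\<lambda>g. pmf (K r g D) True)" for r D
    by (rule pmf_integrable_bound[where B=1]) (rule pmf_abs_le1)
  have intK2: "integrable (measure_pmf R) (\<lambda>r. \<integral>g. pmf (K r g D) True \<partial>W)" for D
    by (rule pmf_integrable_bound[where B=1], rule pmf_integral_abs_bound) (rule pmf_abs_le1)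
  have diff: "F j - F (Suc j) = (\<integral>r. (\<integral>g. \<Delta> r g \<partial>W) \<partial>R)"
  proof -
    have "F j - F (Suc j) = (\<integral>r. (\<integral>g. pmf (K r g (\<lambda>_. Y)) True \<partial>W) - (\<integral>g. pmf (K r g N) True \<partial>W) \<partial>R)"
      unfolding F_def QjG QsG FK by (rule Bochner_Integration.integral_diff[symmetric]) (rule intK2)+
    also have "\<dots> = (\<integral>r. (\<integral>g. \<Delta> r g \<partial>W) \<partial>R)"
      unfolding \<Delta>_def by (intro Bochner_Integration.integral_cong refl Bochner_Integration.integral_diff[symmetric] intK)
    finally show ?thesis .
  qed
  obtain r where r: "F j - F (Suc j) \<le> (\<integral>g. \<Delta> r g \<partial>W)"
  proof -
    have "\<exists>r\<in>set_pmf R. F j - F (Suc j) \<le> (\<integral>g. \<Delta> r g \<partial>W)"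
      by (rule pmf_exists_ge[where B=1]) (use diff in \<open>auto intro: pmf_integral_abs_bound \<Delta>b\<close>)
    then show ?thesis using that by blast
  qed
  obtain g where g: "F j - F (Suc j) \<le> \<Delta> r g"
    using pmf_exists_ge[of "\<Delta> r" 1 "F j - F (Suc j)" W] r \<Delta>b by auto
  define bob where "bob = bob0 r g"
  define u where "u = (\<lambda>(D::(nat \<Rightarrow> nat) \<Rightarrow> nat set set pmf) \<sigma> m. pmf (bind_pmf (D \<sigma>) (\<lambda>x. return_pmf (bob m x))) True)"
  define h where "h = (\<lambda>\<sigma> m. u (\<lambda>_. Y) \<sigma> m - u N \<sigma> m)"
  have ub: "\<bar>u D \<sigma> m\<bar> \<le> 1" for D \<sigma> m unfolding u_def by (rule pmf_abs_le1)
  have hb: "\<bar>h \<sigma> m\<bar> \<le> 1" for \<sigma> m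
    unfolding h_def u_def using pmf_le_1 pmf_nonneg
    by (smt (verit, best))
  have Kexp: "pmf (K r g D) True = (\<integral>\<sigma>. (\<integral>f. u D \<sigma> (alice0 r f) \<partial>PN \<sigma>) \<partial>L)" for D
    unfolding K_def u_def bob_def by (simp add: pmf_bind)
  have intu: "integrable (measure_pmf (PN \<sigma>)) (\<lambda>f. u D \<sigma> (alice0 r f))" for D \<sigma>
    by (rule pmf_integrable_bound[where B=1]) (rule ub)
  have intu2: "integrable (measure_pmf L) (\<lambda>\<sigma>. \<integral>f. u D \<sigma> (alice0 r f) \<partial>PN \<sigma>)" for D
    by (rule pmf_integrable_bound[where B=1], rule pmf_integral_abs_bound) (rule ub)
  have \<Delta>exp: "\<Delta> r g = (\<integral>\<sigma>. (\<integral>f. h \<sigma> (alice0 r f) \<partial>PN \<sigma>) \<partial>L)"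
  proof -
    have "\<Delta> r g = (\<integral>\<sigma>. (\<integral>f. u (\<lambda>_. Y) \<sigma> (alice0 r f) \<partial>PN \<sigma>) - (\<integral>f. u N \<sigma> (alice0 r f) \<partial>PN \<sigma>) \<partial>L)"
      unfolding \<Delta>_def Kexp by (rule Bochner_Integration.integral_diff[symmetric]) (rule intu2)+
    also have "\<dots> = (\<integral>\<sigma>. (\<integral>f. h \<sigma> (alice0 r f) \<partial>PN \<sigma>) \<partial>L)"
      unfolding h_def by (intro Bochner_Integration.integral_cong refl Bochner_Integration.integral_diff[symmetric] intu)
    finally show ?thesis .
  qed
  define alice where "alice = (\<lambda>\<sigma>. alice0 r (SOME f. f \<in> set_pmf (PN \<sigma>) \<and>
                        (\<integral>f'. h \<sigma> (alice0 r f') \<partial>PN \<sigma>) \<le> h \<sigma> (alice0 r f)))"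
  have al: "(\<integral>f. h \<sigma> (alice0 r f) \<partial>PN \<sigma>) \<le> h \<sigma> (alice \<sigma>)" for \<sigma>
  proof -
    have "\<exists>f\<in>set_pmf (PN \<sigma>). (\<integral>f'. h \<sigma> (alice0 r f') \<partial>PN \<sigma>) \<le> h \<sigma> (alice0 r f)"
      by (rule pmf_exists_ge[where B=1]) (auto intro: hb)
    then have "\<exists>f. f \<in> set_pmf (PN \<sigma>) \<and> (\<integral>f'. h \<sigma> (alice0 r f') \<partial>PN \<sigma>) \<le> h \<sigma> (alice0 r f)" by blast
    from someI_ex[OF this] show ?thesis unfolding alice_def by blast
  qed
  have alen: "\<forall>\<sigma>. length (alice \<sigma>) \<le> c"
    unfolding alice_def alice0_def using ovme_msg_len[of send c, OF assms(5)] by blast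
  have hlp: "hlp_success_prob n t alice bob = 1/2 + 1/2 * (\<integral>\<sigma>. h \<sigma> (alice \<sigma>) \<partial>L)"
  proof -
    define Ph where "Ph = (\<lambda>yes. do {\<sigma> \<leftarrow> L; M \<leftarrow> matching_dist n t \<sigma> yes; return_pmf (bob (alice \<sigma>) M = yes)})"
    have "hlp_success_prob n t alice bob = (\<integral>yes. pmf (Ph yes) True \<partial>bernoulli_pmf (1/2))"
      unfolding hlp_success_prob_def measure_pmf_single L_def Ph_def by (rule pmf_bind)
    also have "\<dots> = 1/2 * pmf (Ph True) True + 1/2 * pmf (Ph False) True" by simp
    also have "pmf (Ph True) True = (\<integral>\<sigma>. u (\<lambda>_. Y) \<sigma> (alice \<sigma>) \<partial>L)"
      unfolding Ph_def u_def md by (simp add: pmf_bind)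
    also have "Ph False = map_pmf Not (do {\<sigma> \<leftarrow> L; M \<leftarrow> N \<sigma>; return_pmf (bob (alice \<sigma>) M)})"
      unfolding Ph_def md by (simp add: map_bind_pmf)
    also have "pmf \<dots> True = 1 - (\<integral>\<sigma>. u N \<sigma> (alice \<sigma>) \<partial>L)"
      unfolding pmf_map_Not u_def by (simp add: pmf_bind)
    also have "(\<integral>\<sigma>. u (\<lambda>_. Y) \<sigma> (alice \<sigma>) \<partial>L) = (\<integral>\<sigma>. h \<sigma> (alice \<sigma>) \<partial>L) + (\<integral>\<sigma>. u N \<sigma> (alice \<sigma>) \<partial>L)"
      unfolding h_def
      by (subst Bochner_Integration.integral_diff) (auto intro: pmf_integrable_bound[where B=1] ub)
    finally show ?thesis by (simp add: field_simps)
  qed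
  have "(\<integral>\<sigma>. (\<integral>f. h \<sigma> (alice0 r f) \<partial>PN \<sigma>) \<partial>L) \<le> (\<integral>\<sigma>. h \<sigma> (alice \<sigma>) \<partial>L)"
    by (intro integral_mono al pmf_integrable_bound[where B=1] pmf_integral_abs_bound hb)
  then have h1: "hlp_success_prob n t alice bob \<ge> 1/2 + 1/2 * (F j - F (Suc j))"
    using hlp g \<Delta>exp by simp
  have h2: "1/2 * (F j - F (Suc j)) \<ge> \<epsilon> / real k" using j(2) by (simp add: mult.commute)
  have "hlp_success_prob n t alice bob \<ge> 1/2 + \<epsilon> / real k" using h1 h2 by linarith
  then show ?thesis using alen by blast
qed

end
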